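(* Let $t$ be a positive integer, $s\ge 2$, and let $G=K(n_1,\dots,n_s)$ be a complete $s$-partite graph with $n_1\ge n_2\ge\cdots\ge n_s\ge 1$. Suppose exactly $r$ parts of $G$ have at least $2t$ vertices (so $n_1,\dots,n_r\ge 2t>n_{r+1}$), and let $\sigma_{r+1,s}=\sum_{j=r+1}^{s} n_j$. Then $$r+\left\lceil \frac{\sigma_{r+1,s}}{2t}\right\rceil\le \chi_t(G)\le r+\left\lceil \frac{\sigma_{r+1,s}}{t+1}\right\rceil.$$ Moreover both bounds are attained: for all integers $0\le r\le s$ with $s\ge 2$, the graph with $n_1=\cdots=n_r=2t+1$ and $n_{r+1}=\cdots=n_s=1$ attains the upper bound, and the graph with $n_1=\cdots=n_r=2t$ and $n_{r+1}=\cdots=n_s=t$ attains the lower bound.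
   Context: $K(n_1,\dots,n_s)$ denotes the complete $s$-partite graph whose parts have $n_1,\dots,n_s$ vertices. A map $f:V(G)\to\{1,\dots,k\}$ is a $t$-relaxed $k$-coloring if every vertex $u$ has at most $t$ neighbors $v$ with $f(v)=f(u)$; $\chi_t(G)$ is the minimum $k$ for which such a coloring exists. *)

theory Defs
  imports Complex_Main
begin

definition relaxed_coloring ::
  "'v set \<Rightarrow> ('v \<Rightarrow> 'v \<Rightarrow> bool) \<Rightarrow> nat \<Rightarrow> nat \<Rightarrow> ('v \<Rightarrow> nat) \<Rightarrow> bool" where
  "relaxed_coloring V adj t k f \<longleftrightarrow>
     (\<forall>u\<in>V. f u \<in> {1..k}) \<and>
     (\<forall>u\<in>V. card {v\<in>V. adj u v \<and> f v = f u} \<le> t)"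

definition relaxed_chromatic ::
  "'v set \<Rightarrow> ('v \<Rightarrow> 'v \<Rightarrow> bool) \<Rightarrow> nat \<Rightarrow> nat" where
  "relaxed_chromatic V adj t = (LEAST k. \<exists>f. relaxed_coloring V adj t k f)"

text \<open>Complete multipartite graph K(n_1,...,n_s), parts given by the list ns
  (0-indexed): vertex (i,j) is the j-th vertex of part i; two vertices are
  adjacent iff they lie in different parts.\<close>
definition cmp_vertices :: "nat list \<Rightarrow> (nat \<times> nat) set" where
  "cmp_vertices ns = {(i, j). i < length ns \<and> j < ns ! i}"

definition cmp_adj :: "nat \<times> nat \<Rightarrow> nat \<times> nat \<Rightarrow> bool" where
  "cmp_adj u v \<longleftrightarrow> fst u \<noteq> fst v"

definition chi_cmp :: "nat \<Rightarrow> nat list \<Rightarrow> nat" where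
  "chi_cmp t ns = relaxed_chromatic (cmp_vertices ns) cmp_adj t"

end

theory Submission
  imports Defs
begin

lemma cmp_vertices_Sigma: "cmp_vertices ns = (SIGMA i:{..<length ns}. {..<ns!i})"
  by (auto simp: cmp_vertices_def)

lemma finite_cmp: "finite (cmp_vertices ns)" by (simp add: cmp_vertices_Sigma)

lemma weight_lb:
  assumes col: "relaxed_coloring V adj t k f" and fin: "finite V"
  and cls: "\<And>c. (\<Sum>v\<in>{v\<in>V. f v = c}. w v) \<le> (1::real)"
  shows "(\<Sum>v\<in>V. w v) \<le> real k"
proof -
  have img: "f ` V \<subseteq> {1..k}" using col by (auto simp: relaxed_coloring_def)
  have "(\<Sum>v\<in>V. w v) = (\<Sum>c\<in>{1..k}. \<Sum>v\<in>{v\<in>V. f v = c}. w v)"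
    using sum.group[OF fin _ img, of w] by simp
  also have "\<dots> \<le> (\<Sum>c\<in>{1..k}. 1)" by (rule sum_mono) (rule cls)
  finally show ?thesis by simp
qed

lemma class_nbr:
  assumes col: "relaxed_coloring (cmp_vertices ns) cmp_adj t k f"
  and u: "u \<in> cmp_vertices ns"
  shows "card {v\<in>cmp_vertices ns. f v = f u \<and> fst v \<noteq> fst u} \<le> t"
proof -
  have "{v\<in>cmp_vertices ns. f v = f u \<and> fst v \<noteq> fst u} = {v\<in>cmp_vertices ns. cmp_adj u v \<and> f v = f u}"
    by (auto simp: cmp_adj_def)
  then show ?thesis using col u by (auto simp: relaxed_coloring_def)
qed

lemma mixed_card:
  assumes col: "relaxed_coloring (cmp_vertices ns) cmp_adj t k f"
  and "u \<in> cmp_vertices ns" "v \<in> cmp_vertices ns" "f u = c" "f v = c" "fst u \<noteq> fst v"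
  shows "card {x\<in>cmp_vertices ns. f x = c} \<le> 2*t"
proof -
  have "{x\<in>cmp_vertices ns. f x = c} \<subseteq> {x\<in>cmp_vertices ns. f x = f u \<and> fst x \<noteq> fst u}
     \<union> {x\<in>cmp_vertices ns. f x = f v \<and> fst x \<noteq> fst v}" using assms by auto
  then have "card {x\<in>cmp_vertices ns. f x = c} \<le> card ({x\<in>cmp_vertices ns. f x = f u \<and> fst x \<noteq> fst u}
     \<union> {x\<in>cmp_vertices ns. f x = f v \<and> fst x \<noteq> fst v})"
    by (intro card_mono) (auto intro: finite_subset[OF _ finite_cmp])
  also have "\<dots> \<le> card {x\<in>cmp_vertices ns. f x = f u \<and> fst x \<noteq> fst u}
     + card {x\<in>cmp_vertices ns. f x = f v \<and> fst x \<noteq> fst v}" by (rule card_Un_le)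
  also have "\<dots> \<le> t + t" using class_nbr[OF col] assms by (meson add_mono)
  finally show ?thesis by simp
qed

lemma single_card:
  assumes col: "relaxed_coloring (cmp_vertices ns) cmp_adj t k f"
  and u: "u \<in> cmp_vertices ns" "f u = c" "ns ! fst u = 1"
  shows "card {x\<in>cmp_vertices ns. f x = c} \<le> t + 1"
proof -
  have "{x\<in>cmp_vertices ns. f x = c} \<subseteq> insert u {x\<in>cmp_vertices ns. f x = f u \<and> fst x \<noteq> fst u}"
  proof
    fix x assume x: "x \<in> {x\<in>cmp_vertices ns. f x = c}"
    show "x \<in> insert u {x\<in>cmp_vertices ns. f x = f u \<and> fst x \<noteq> fst u}"
    proof (cases "fst x = fst u")
      case True
      then have "snd x = 0" "snd u = 0" using x u by (auto simp: cmp_vertices_def)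
      then have "x = u" using True by (simp add: prod_eq_iff)
      then show ?thesis by simp
    qed (use x u in auto)
  qed
  then have "card {x\<in>cmp_vertices ns. f x = c} \<le> card (insert u {x\<in>cmp_vertices ns. f x = f u \<and> fst x \<noteq> fst u})"
    by (intro card_mono) (auto intro: finite_subset[OF _ finite_cmp])
  also have "\<dots> \<le> Suc (card {x\<in>cmp_vertices ns. f x = f u \<and> fst x \<noteq> fst u})"
    by (simp add: card_insert_le_m1 finite_cmp card_insert_if)
  also have "\<dots> \<le> t + 1" using class_nbr[OF col u(1)] by simp
  finally show ?thesis .
qed

lemma class_weight:
  fixes g :: "nat \<Rightarrow> real"
  assumes col: "relaxed_coloring (cmp_vertices ns) cmp_adj t k f"
  and nonneg: "\<And>i. g i \<ge> 0"
  and pure: "\<And>i. i < length ns \<Longrightarrow> real (ns!i) * g i \<le> 1"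
  and mixed: "\<And>C. C \<subseteq> cmp_vertices ns \<Longrightarrow> card C \<le> 2*t \<Longrightarrow>
        (\<forall>u\<in>C. ns ! fst u = 1 \<longrightarrow> card C \<le> t+1) \<Longrightarrow> (\<Sum>x\<in>C. g (fst x)) \<le> 1"
  shows "(\<Sum>x\<in>{x\<in>cmp_vertices ns. f x = c}. g (fst x)) \<le> 1"
proof (cases "\<exists>u\<in>{x\<in>cmp_vertices ns. f x = c}. \<exists>v\<in>{x\<in>cmp_vertices ns. f x = c}. fst u \<noteq> fst v")
  case True
  then obtain u v where "u \<in> cmp_vertices ns" "v \<in> cmp_vertices ns" "f u = c" "f v = c" "fst u \<noteq> fst v" by auto
  then have c1: "card {x\<in>cmp_vertices ns. f x = c} \<le> 2*t" using mixed_card[OF col] by blast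
  have c2: "\<forall>w\<in>{x\<in>cmp_vertices ns. f x = c}. ns ! fst w = 1 \<longrightarrow> card {x\<in>cmp_vertices ns. f x = c} \<le> t+1"
    using single_card[OF col] by blast
  show ?thesis by (rule mixed[OF _ c1 c2]) auto
next
  case False
  show ?thesis
  proof (cases "{x\<in>cmp_vertices ns. f x = c} = {}")
    case True then show ?thesis by (simp only: True sum.empty)
  next
    case ne: False
    then obtain u where u: "u \<in> cmp_vertices ns" "f u = c" by auto
    let ?i = "fst u"
    have all: "\<forall>x\<in>{x\<in>cmp_vertices ns. f x = c}. fst x = ?i" using False u by (metis (mono_tags, lifting) mem_Collect_eq)
    have il: "?i < length ns" using u by (auto simp: cmp_vertices_def)
    have sub: "{x\<in>cmp_vertices ns. f x = c} \<subseteq> {?i} \<times> {..<ns!?i}"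
      using all by (auto simp: cmp_vertices_def)
    have cd: "card {x\<in>cmp_vertices ns. f x = c} \<le> ns!?i"
      using card_mono[OF _ sub] by simp
    have "(\<Sum>x\<in>{x\<in>cmp_vertices ns. f x = c}. g (fst x)) = (\<Sum>x\<in>{x\<in>cmp_vertices ns. f x = c}. g ?i)"
      using all by (intro sum.cong) auto
    also have "\<dots> = real (card {x\<in>cmp_vertices ns. f x = c}) * g ?i" by simp
    also have "\<dots> \<le> real (ns!?i) * g ?i"
      using cd nonneg[of ?i] by (intro mult_right_mono) auto
    also have "\<dots> \<le> 1" by (rule pure[OF il])
    finally show ?thesis .
  qed
qed

lemma sum_V: "(\<Sum>v\<in>cmp_vertices ns. g (fst v)) = (\<Sum>i<length ns. real (ns!i) * g i)"
proof -
  have "(\<Sum>v\<in>cmp_vertices ns. g (fst v)) = (\<Sum>(i,j)\<in>(SIGMA i:{..<length ns}. {..<ns!i}). g i)"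
    by (simp add: cmp_vertices_Sigma split_beta)
  also have "\<dots> = (\<Sum>i<length ns. \<Sum>j<ns!i. g i)"
    by (rule sum.Sigma[symmetric]) auto
  finally show ?thesis by simp
qed


lemma ceil_div: "b > 0 \<Longrightarrow> \<lceil>real a / real b\<rceil> = int ((a + b - 1) div b)"
proof -
  assume b: "b > 0"
  define q where "q = (a + b - 1) div b"
  have h1: "q * b \<le> a + b - 1" unfolding q_def by (simp add: div_times_less_eq_dividend)
  have h2: "a + b - 1 < q * b + b" unfolding q_def
    using div_mult_mod_eq[of "a+b-1" b] mod_less_divisor[OF b, of "a+b-1"] by linarith
  have n1: "a \<le> q * b" using h2 b by linarith
  have n2: "q * b < a + b" using h1 b by linarith
  have "real a \<le> real q * real b" using n1 by (simp flip: of_nat_mult)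
  moreover have "real q * real b < real a + real b" using n2 by (simp flip: of_nat_mult of_nat_add)
  ultimately show ?thesis unfolding q_def[symmetric] using b
    by (simp add: ceiling_eq_iff field_simps)
qed

lemma chunk:
  assumes fin: "finite A" and m: "m \<ge> 1"
  shows "\<exists>g. (\<forall>a\<in>A. 1 \<le> g a \<and> g a \<le> (card A + m - 1) div m) \<and> (\<forall>a\<in>A. card {b\<in>A. g b = g a} \<le> m)"
proof -
  obtain h where h: "bij_betw h A {0..<card A}" using ex_bij_betw_finite_nat[OF fin] by blast
  define g where "g a = h a div m + 1" for a
  have b1: "\<forall>a\<in>A. 1 \<le> g a \<and> g a \<le> (card A + m - 1) div m"
  proof
    fix a assume "a \<in> A"
    then have "h a < card A" using h by (auto simp: bij_betw_def)
    then have "h a + m \<le> card A + m - 1" by simp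
    then have "(h a + m) div m \<le> (card A + m - 1) div m" by (rule div_le_mono)
    moreover have "(h a + m) div m = h a div m + 1" using m by simp
    ultimately show "1 \<le> g a \<and> g a \<le> (card A + m - 1) div m" by (simp add: g_def)
  qed
  have b2: "\<forall>a\<in>A. card {b\<in>A. g b = g a} \<le> m"
  proof
    fix a assume "a \<in> A"
    let ?d = "h a div m"
    have "inj_on h {b\<in>A. g b = g a}" using h by (auto simp: bij_betw_def intro: inj_on_subset)
    moreover have "h ` {b\<in>A. g b = g a} \<subseteq> {?d * m..<?d * m + m}"
    proof
      fix p assume "p \<in> h ` {b\<in>A. g b = g a}"
      then have pd: "p div m = ?d" by (auto simp: g_def)
      have "p = p div m * m + p mod m" by simp
      moreover have "p mod m < m" using m by simp
      ultimately show "p \<in> {?d * m..<?d * m + m}" using pd by simp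
    qed
    ultimately have "card {b\<in>A. g b = g a} \<le> card {?d * m..<?d * m + m}"
      by (intro card_inj_on_le) auto
    then show "card {b\<in>A. g b = g a} \<le> m" by simp
  qed
  show ?thesis using b1 b2 by blast
qed


lemma chi_le: "relaxed_coloring (cmp_vertices ns) cmp_adj t k f \<Longrightarrow> chi_cmp t ns \<le> k"
  unfolding chi_cmp_def relaxed_chromatic_def by (rule Least_le) blast

lemma chi_ge:
  assumes ex: "\<exists>f. relaxed_coloring (cmp_vertices ns) cmp_adj t k0 f"
  and lb: "\<And>k f. relaxed_coloring (cmp_vertices ns) cmp_adj t k f \<Longrightarrow> L \<le> real k"
  shows "L \<le> real (chi_cmp t ns)"
proof -
  have "\<exists>f. relaxed_coloring (cmp_vertices ns) cmp_adj t (chi_cmp t ns) f"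
    unfolding chi_cmp_def relaxed_chromatic_def by (rule LeastI_ex) (use ex in blast)
  then show ?thesis using lb by blast
qed

lemma upper_col:
  assumes t: "t \<ge> 1"
  shows "\<exists>f. relaxed_coloring (cmp_vertices ns) cmp_adj t
            (r + ((\<Sum>j = r..<length ns. ns ! j) + t) div (t+1)) f"
proof -
  define A where "A = {v\<in>cmp_vertices ns. r \<le> fst v}"
  have finA: "finite A" unfolding A_def using finite_cmp by simp
  have "A = (SIGMA i:{r..<length ns}. {..<ns!i})" unfolding A_def cmp_vertices_def by auto
  then have cA: "card A = (\<Sum>j = r..<length ns. ns ! j)" by simp
  obtain g where g1: "\<forall>a\<in>A. 1 \<le> g a \<and> g a \<le> (card A + (t+1) - 1) div (t+1)"
    and g2: "\<forall>a\<in>A. card {b\<in>A. g b = g a} \<le> t+1"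
    using chunk[OF finA, of "t+1"] by auto
  define f where "f v = (if fst v < r then fst v + 1 else r + g v)" for v
  let ?k = "r + ((\<Sum>j = r..<length ns. ns ! j) + t) div (t+1)"
  have c1: "\<forall>u\<in>cmp_vertices ns. f u \<in> {1..?k}"
  proof
    fix u assume u: "u \<in> cmp_vertices ns"
    show "f u \<in> {1..?k}"
    proof (cases "fst u < r")
      case True then show ?thesis by (simp add: f_def)
    next
      case False
      then have "u \<in> A" using u by (simp add: A_def)
      then show ?thesis using g1 False cA by (auto simp: f_def)
    qed
  qed
  have c2: "\<forall>u\<in>cmp_vertices ns. card {v\<in>cmp_vertices ns. cmp_adj u v \<and> f v = f u} \<le> t"
  proof
    fix u assume u: "u \<in> cmp_vertices ns"
    show "card {v\<in>cmp_vertices ns. cmp_adj u v \<and> f v = f u} \<le> t"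
    proof (cases "fst u < r")
      case True
      have "{v\<in>cmp_vertices ns. cmp_adj u v \<and> f v = f u} = {}"
      proof (rule ccontr)
        assume "{v\<in>cmp_vertices ns. cmp_adj u v \<and> f v = f u} \<noteq> {}"
        then obtain v where v: "v \<in> cmp_vertices ns" "fst u \<noteq> fst v" "f v = f u"
          by (auto simp: cmp_adj_def)
        show False
        proof (cases "fst v < r")
          case True then show False using v \<open>fst u < r\<close> by (simp add: f_def)
        next
          case False
          then have "v \<in> A" using v by (simp add: A_def)
          then show False using g1 v False \<open>fst u < r\<close> by (auto simp: f_def)
        qed
      qed
      then show ?thesis by (simp only: card.empty)
    next
      case False
      then have uA: "u \<in> A" using u by (simp add: A_def)
      have "{v\<in>cmp_vertices ns. cmp_adj u v \<and> f v = f u} \<subseteq> {b\<in>A. g b = g u} - {u}"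
      proof
        fix v assume v: "v \<in> {v\<in>cmp_vertices ns. cmp_adj u v \<and> f v = f u}"
        have nr: "\<not> fst v < r"
        proof
          assume "fst v < r"
          then show False using v g1 uA False by (auto simp: f_def)
        qed
        then show "v \<in> {b\<in>A. g b = g u} - {u}" using v False by (auto simp: A_def f_def cmp_adj_def)
      qed
      then have "card {v\<in>cmp_vertices ns. cmp_adj u v \<and> f v = f u} \<le> card ({b\<in>A. g b = g u} - {u})"
        by (intro card_mono) (use finA in auto)
      also have "\<dots> = card {b\<in>A. g b = g u} - 1" using uA by (simp add: card_Diff_singleton)
      also have "\<dots> \<le> t" using g2 uA by fastforce
      finally show ?thesis .
    qed
  qed
  show ?thesis using c1 c2 unfolding relaxed_coloring_def by blast
qed


lemma split_r:
  fixes T r :: nat and ns :: "nat list"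
  assumes sorted: "\<forall>i j. i \<le> j \<and> j < length ns \<longrightarrow> ns ! j \<le> ns ! i"
  and r: "r = card {i. i < length ns \<and> ns ! i \<ge> T}"
  shows "r \<le> length ns" "\<And>i. i < length ns \<Longrightarrow> (i < r \<longleftrightarrow> T \<le> ns ! i)"
proof -
  let ?S = "{i. i < length ns \<and> ns ! i \<ge> T}"
  have "?S \<subseteq> {..<length ns}" by auto
  then show "r \<le> length ns" unfolding r using card_mono[of "{..<length ns}" ?S] by simp
  fix i assume i: "i < length ns"
  show "i < r \<longleftrightarrow> T \<le> ns ! i"
  proof
    assume "T \<le> ns ! i"
    then have "{..i} \<subseteq> ?S"
    proof (intro subsetI)
      fix j assume "j \<in> {..i}" "T \<le> ns ! i"
      then have "j \<le> i" by simp
      then have "ns ! i \<le> ns ! j" using sorted i by blast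
      then show "j \<in> ?S" using \<open>j \<le> i\<close> i \<open>T \<le> ns ! i\<close> by auto
    qed
    then have "card {..i} \<le> r" unfolding r by (intro card_mono) auto
    then show "i < r" by simp
  next
    assume ir: "i < r"
    show "T \<le> ns ! i"
    proof (rule ccontr)
      assume "\<not> T \<le> ns ! i"
      then have "?S \<subseteq> {..<i}"
      proof (intro subsetI)
        fix j assume j: "j \<in> ?S" and nt: "\<not> T \<le> ns ! i"
        show "j \<in> {..<i}"
        proof (rule ccontr)
          assume "j \<notin> {..<i}"
          then have "i \<le> j" by simp
          then have "ns ! j \<le> ns ! i" using sorted j by blast
          then show False using j nt by simp
        qed
      qed
      then have "r \<le> i" unfolding r using card_mono[of "{..<i}" ?S] by simp
      then show False using ir by simp
    qed
  qed
qed

lemma part1: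
  fixes t :: nat and ns :: "nat list"
  assumes t: "t \<ge> 1"
  and sorted: "\<forall>i j. i \<le> j \<and> j < length ns \<longrightarrow> ns ! j \<le> ns ! i"
  and r: "r = card {i. i < length ns \<and> ns ! i \<ge> 2 * t}"
  shows "int r + \<lceil>real (\<Sum>j = r..<length ns. ns ! j) / real (2 * t)\<rceil> \<le> int (chi_cmp t ns)"
    and "int (chi_cmp t ns) \<le> int r + \<lceil>real (\<Sum>j = r..<length ns. ns ! j) / real (t + 1)\<rceil>"
proof -
  let ?\<sigma> = "\<Sum>j = r..<length ns. ns ! j"
  obtain f0 where f0: "relaxed_coloring (cmp_vertices ns) cmp_adj t (r + (?\<sigma> + t) div (t+1)) f0"
    using upper_col[OF t] by blast
  have "chi_cmp t ns \<le> r + (?\<sigma> + t) div (t+1)" by (rule chi_le[OF f0])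
  moreover have "\<lceil>real ?\<sigma> / real (t + 1)\<rceil> = int ((?\<sigma> + (t+1) - 1) div (t+1))"
    by (rule ceil_div) simp
  ultimately show "int (chi_cmp t ns) \<le> int r + \<lceil>real ?\<sigma> / real (t + 1)\<rceil>" by simp
  have rl: "r \<le> length ns" and iff: "\<And>i. i < length ns \<Longrightarrow> (i < r \<longleftrightarrow> 2*t \<le> ns ! i)"
    using split_r[OF sorted r] by auto
  define g where "g i = 1 / max (real (ns!i)) (real (2*t))" for i
  have tp: "real (2*t) > 0" using t by simp
  have L: "real r + real ?\<sigma> / real (2*t) \<le> real (chi_cmp t ns)"
  proof (rule chi_ge)
    show "\<exists>f. relaxed_coloring (cmp_vertices ns) cmp_adj t (r + (?\<sigma> + t) div (t+1)) f" using f0 by blast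
  next
    fix k f assume col: "relaxed_coloring (cmp_vertices ns) cmp_adj t k f"
    have gle: "g i \<le> 1 / real (2*t)" for i unfolding g_def using tp
      by (intro divide_left_mono) auto
    have "(\<Sum>v\<in>cmp_vertices ns. g (fst v)) \<le> real k"
    proof (rule weight_lb[OF col finite_cmp])
      fix c show "(\<Sum>v\<in>{v\<in>cmp_vertices ns. f v = c}. g (fst v)) \<le> 1"
      proof (rule class_weight[OF col])
        fix i show "g i \<ge> 0" unfolding g_def by simp
      next
        fix i assume "i < length ns"
        show "real (ns!i) * g i \<le> 1" unfolding g_def using tp
          by (simp add: field_simps)
      next
        fix C :: "(nat \<times> nat) set"
        assume "card C \<le> 2*t"
        have "(\<Sum>x\<in>C. g (fst x)) \<le> real (card C) * (1 / real (2*t))"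
          by (rule sum_bounded_above) (rule gle)
        also have "\<dots> \<le> 1" using \<open>card C \<le> 2*t\<close> tp by (simp add: field_simps)
        finally show "(\<Sum>x\<in>C. g (fst x)) \<le> 1" .
      qed
    qed
    moreover have "(\<Sum>v\<in>cmp_vertices ns. g (fst v)) = real r + real ?\<sigma> / real (2*t)"
    proof -
      have "(\<Sum>v\<in>cmp_vertices ns. g (fst v)) = (\<Sum>i<length ns. real (ns!i) * g i)" by (rule sum_V)
      also have "\<dots> = (\<Sum>i=0..<r. real (ns!i) * g i) + (\<Sum>i=r..<length ns. real (ns!i) * g i)"
        using rl by (simp add: atLeast0LessThan[symmetric] sum.atLeastLessThan_concat)
      also have "(\<Sum>i=0..<r. real (ns!i) * g i) = (\<Sum>i=0..<r. 1)"
      proof (rule sum.cong)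
        fix i assume "i \<in> {0..<r}"
        then have "i < length ns" "2*t \<le> ns!i" using rl iff[of i] by auto
        then show "real (ns!i) * g i = 1" unfolding g_def using tp by auto
      qed simp
      also have "(\<Sum>i=r..<length ns. real (ns!i) * g i) = (\<Sum>i=r..<length ns. real (ns!i) / real (2*t))"
      proof (rule sum.cong)
        fix i assume "i \<in> {r..<length ns}"
        then have "\<not> 2*t \<le> ns!i" using iff[of i] by auto
        then show "real (ns!i) * g i = real (ns!i) / real (2*t)" unfolding g_def by auto
      qed simp
      also have "\<dots> = real ?\<sigma> / real (2*t)" by (simp add: sum_divide_distrib)
      finally show ?thesis by simp
    qed
    ultimately show "real r + real ?\<sigma> / real (2*t) \<le> real k" by simp
  qed
  have "\<lceil>real ?\<sigma> / real (2 * t)\<rceil> \<le> int (chi_cmp t ns) - int r"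
    using L by (simp add: ceiling_le_iff)
  then show "int r + \<lceil>real ?\<sigma> / real (2 * t)\<rceil> \<le> int (chi_cmp t ns)" by simp
qed


lemma nth_rr: "i < s \<Longrightarrow> r \<le> s \<Longrightarrow> (replicate r a @ replicate (s-r) b) ! i = (if i < r then a else b)"
  by (simp add: nth_append)

lemma sorted_rr:
  fixes a b r s :: nat
  assumes "b \<le> a" "r \<le> s"
  shows "\<forall>i j. i \<le> j \<and> j < length (replicate r a @ replicate (s-r) b) \<longrightarrow>
     (replicate r a @ replicate (s-r) b) ! j \<le> (replicate r a @ replicate (s-r) b) ! i"
  using assms by (auto simp: nth_rr)

lemma card_rr:
  fixes a b r s T :: nat
  assumes "r \<le> s" "b < T" "T \<le> a"
  shows "card {i. i < length (replicate r a @ replicate (s-r) b) \<and> (replicate r a @ replicate (s-r) b) ! i \<ge> T} = r"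
proof -
  have "{i. i < length (replicate r a @ replicate (s-r) b) \<and> (replicate r a @ replicate (s-r) b) ! i \<ge> T} = {..<r}"
    using assms by (auto simp: nth_rr split: if_splits)
  then show ?thesis by simp
qed

lemma sum_rr:
  assumes "r \<le> s"
  shows "(\<Sum>j = r..<length (replicate r a @ replicate (s-r) b). (replicate r a @ replicate (s-r) b) ! j) = (s - r) * b"
proof -
  have "(\<Sum>j = r..<length (replicate r a @ replicate (s-r) b). (replicate r a @ replicate (s-r) b) ! j) = (\<Sum>j = r..<s. b)"
    using assms by (intro sum.cong) (auto simp: nth_rr)
  then show ?thesis by simp
qed

lemma part2_lower:
  fixes t :: nat
  assumes t: "t \<ge> 1" and rs: "r \<le> s"
  shows "real r + real (s - r) / real (t+1) \<le> real (chi_cmp t (replicate r (2*t+1) @ replicate (s-r) 1))"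
proof -
  let ?ns = "replicate r (2*t+1) @ replicate (s-r) (1::nat)"
  have len: "length ?ns = s" using rs by simp
  have nth: "\<And>i. i < s \<Longrightarrow> ?ns ! i = (if i < r then 2*t+1 else 1)" using rs by (simp add: nth_rr)
  show ?thesis
  proof (rule chi_ge)
    show "\<exists>f. relaxed_coloring (cmp_vertices ?ns) cmp_adj t
            (r + ((\<Sum>j = r..<length ?ns. ?ns ! j) + t) div (t+1)) f" using upper_col[OF t] by blast
  next
    fix k f assume col: "relaxed_coloring (cmp_vertices ?ns) cmp_adj t k f"
    define g where "g i = (if i < r then 1 / real (2*t+1) else 1 / real (t+1))" for i
    have gle: "g i \<le> 1 / real (t+1)" for i unfolding g_def using t
      by (auto intro!: divide_left_mono)
    have "(\<Sum>v\<in>cmp_vertices ?ns. g (fst v)) \<le> real k"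
    proof (rule weight_lb[OF col finite_cmp])
      fix c show "(\<Sum>v\<in>{v\<in>cmp_vertices ?ns. f v = c}. g (fst v)) \<le> 1"
      proof (rule class_weight[OF col])
        fix i show "g i \<ge> 0" unfolding g_def by simp
      next
        fix i assume "i < length ?ns"
        then show "real (?ns!i) * g i \<le> 1" unfolding g_def using nth[of i] len
          by auto
      next
        fix C :: "(nat \<times> nat) set"
        assume CV: "C \<subseteq> cmp_vertices ?ns" and c2: "card C \<le> 2*t"
          and c1: "\<forall>u\<in>C. ?ns ! fst u = 1 \<longrightarrow> card C \<le> t+1"
        show "(\<Sum>x\<in>C. g (fst x)) \<le> 1"
        proof (cases "\<exists>u\<in>C. r \<le> fst u")
          case True
          then obtain u where u: "u \<in> C" "r \<le> fst u" by auto
          have "fst u < s" using CV u len by (auto simp: cmp_vertices_def)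
          then have "?ns ! fst u = 1" using nth u by simp
          then have cC: "card C \<le> t+1" using c1 u by blast
          have "(\<Sum>x\<in>C. g (fst x)) \<le> real (card C) * (1 / real (t+1))"
            by (rule sum_bounded_above) (rule gle)
          also have "\<dots> \<le> 1" using cC by (simp add: field_simps)
          finally show ?thesis .
        next
          case False
          have "(\<Sum>x\<in>C. g (fst x)) \<le> real (card C) * (1 / real (2*t+1))"
            by (rule sum_bounded_above) (use False in \<open>auto simp: g_def\<close>)
          also have "\<dots> \<le> 1" using c2 by (simp add: field_simps)
          finally show ?thesis .
        qed
      qed
    qed
    moreover have "(\<Sum>v\<in>cmp_vertices ?ns. g (fst v)) = real r + real (s - r) / real (t+1)"
    proof -
      have "(\<Sum>v\<in>cmp_vertices ?ns. g (fst v)) = (\<Sum>i<s. real (?ns!i) * g i)" unfolding sum_V len ..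
      also have "\<dots> = (\<Sum>i=0..<r. real (?ns!i) * g i) + (\<Sum>i=r..<s. real (?ns!i) * g i)"
        using rs by (simp add: atLeast0LessThan[symmetric] sum.atLeastLessThan_concat)
      also have "(\<Sum>i=0..<r. real (?ns!i) * g i) = (\<Sum>i=0..<r. 1)"
        by (rule sum.cong) (use rs nth in \<open>auto simp: g_def\<close>)
      also have "(\<Sum>i=r..<s. real (?ns!i) * g i) = (\<Sum>i=r..<s. 1 / real (t+1))"
        by (rule sum.cong) (use rs nth in \<open>auto simp: g_def\<close>)
      finally show ?thesis by simp
    qed
    ultimately show "real r + real (s - r) / real (t+1) \<le> real k" by simp
  qed
qed

lemma part3_upper:
  fixes t :: nat
  assumes t: "t \<ge> 1" and rs: "r \<le> s"
  shows "\<exists>f. relaxed_coloring (cmp_vertices (replicate r (2*t) @ replicate (s-r) t)) cmp_adj t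
            (r + ((s - r) + 2 - 1) div 2) f"
proof -
  let ?ns = "replicate r (2*t) @ replicate (s-r) t"
  have len: "length ?ns = s" using rs by simp
  have nth: "\<And>i. i < s \<Longrightarrow> ?ns ! i = (if i < r then 2*t else t)" using rs by (simp add: nth_rr)
  define P where "P = {r..<s}"
  have cP: "card P = s - r" by (simp add: P_def)
  obtain g where g1: "\<forall>a\<in>P. 1 \<le> g a \<and> g a \<le> (card P + 2 - 1) div 2"
    and g2: "\<forall>a\<in>P. card {b\<in>P. g b = g a} \<le> 2"
    using chunk[of P 2] by (auto simp: P_def)
  define f where "f v = (if fst v < r then fst v + 1 else r + g (fst v))" for v :: "nat \<times> nat"
  let ?k = "r + ((s - r) + 2 - 1) div 2"
  have inV: "\<And>v. v \<in> cmp_vertices ?ns \<Longrightarrow> fst v < s \<and> snd v < ?ns ! fst v"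
    using len by (auto simp: cmp_vertices_def)
  have c1: "\<forall>u\<in>cmp_vertices ?ns. f u \<in> {1..?k}"
  proof
    fix u assume u: "u \<in> cmp_vertices ?ns"
    show "f u \<in> {1..?k}"
    proof (cases "fst u < r")
      case True then show ?thesis by (simp add: f_def)
    next
      case False
      then have "fst u \<in> P" using inV[OF u] by (simp add: P_def)
      then show ?thesis using g1 False cP by (auto simp: f_def)
    qed
  qed
  have c2: "\<forall>u\<in>cmp_vertices ?ns. card {v\<in>cmp_vertices ?ns. cmp_adj u v \<and> f v = f u} \<le> t"
  proof
    fix u assume u: "u \<in> cmp_vertices ?ns"
    show "card {v\<in>cmp_vertices ?ns. cmp_adj u v \<and> f v = f u} \<le> t"
    proof (cases "fst u < r")
      case True
      have "{v\<in>cmp_vertices ?ns. cmp_adj u v \<and> f v = f u} = {}"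
      proof (rule ccontr)
        assume "{v\<in>cmp_vertices ?ns. cmp_adj u v \<and> f v = f u} \<noteq> {}"
        then obtain v where v: "v \<in> cmp_vertices ?ns" "fst u \<noteq> fst v" "f v = f u"
          by (auto simp: cmp_adj_def)
        show False
        proof (cases "fst v < r")
          case True then show False using v \<open>fst u < r\<close> by (simp add: f_def)
        next
          case False
          then have "fst v \<in> P" using inV[OF v(1)] by (simp add: P_def)
          then show False using g1 v False \<open>fst u < r\<close> by (auto simp: f_def)
        qed
      qed
      then show ?thesis by (simp only: card.empty)
    next
      case False
      then have uP: "fst u \<in> P" using inV[OF u] by (simp add: P_def)
      define Q where "Q = {b\<in>P. g b = g (fst u)} - {fst u}"
      have finQ: "finite Q" by (simp add: Q_def P_def)
      have cQ: "card Q \<le> 1"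
      proof -
        have "card {b\<in>P. g b = g (fst u)} \<le> 2" using g2 uP by blast
        moreover have "fst u \<in> {b\<in>P. g b = g (fst u)}" using uP by simp
        ultimately show ?thesis by (simp add: Q_def card_Diff_singleton)
      qed
      have "{v\<in>cmp_vertices ?ns. cmp_adj u v \<and> f v = f u} \<subseteq> (SIGMA i:Q. {..<t})"
      proof
        fix v assume v: "v \<in> {v\<in>cmp_vertices ?ns. cmp_adj u v \<and> f v = f u}"
        have nr: "\<not> fst v < r"
        proof
          assume "fst v < r"
          then show False using v g1 uP False by (auto simp: f_def)
        qed
        have vs: "fst v < s" "snd v < ?ns ! fst v" using inV v by auto
        then have "snd v < t" using nth[of "fst v"] nr by simp
        then show "v \<in> (SIGMA i:Q. {..<t})" using v False nr vs
          by (cases v) (auto simp: Q_def P_def f_def cmp_adj_def)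
      qed
      then have "card {v\<in>cmp_vertices ?ns. cmp_adj u v \<and> f v = f u} \<le> card (SIGMA i:Q. {..<t})"
        by (intro card_mono) (use finQ in auto)
      also have "\<dots> = card Q * t" using finQ by simp
      also have "\<dots> \<le> t" using cQ mult_le_mono1[OF cQ, of t] by simp
      finally show ?thesis .
    qed
  qed
  show ?thesis using c1 c2 unfolding relaxed_coloring_def by blast
qed


theorem theorem2p4:
  fixes t :: nat
  assumes "t \<ge> 1"
  shows
   "(\<forall>(ns :: nat list) r.
       length ns \<ge> 2 \<and>
       (\<forall>i j. i \<le> j \<and> j < length ns \<longrightarrow> ns ! j \<le> ns ! i) \<and>
       (\<forall>i < length ns. ns ! i \<ge> 1) \<and>
       r = card {i. i < length ns \<and> ns ! i \<ge> 2 * t}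
     \<longrightarrow>
       int r + \<lceil>real (\<Sum>j = r..<length ns. ns ! j) / real (2 * t)\<rceil> \<le> int (chi_cmp t ns) \<and>
       int (chi_cmp t ns) \<le> int r + \<lceil>real (\<Sum>j = r..<length ns. ns ! j) / real (t + 1)\<rceil>)
    \<and>
    (\<forall>(s :: nat) r. s \<ge> 2 \<and> r \<le> s \<longrightarrow>
       int (chi_cmp t (replicate r (2 * t + 1) @ replicate (s - r) 1))
         = int r + \<lceil>real ((s - r) * 1) / real (t + 1)\<rceil>)
    \<and>
    (\<forall>(s :: nat) r. s \<ge> 2 \<and> r \<le> s \<longrightarrow>
       int (chi_cmp t (replicate r (2 * t) @ replicate (s - r) t))
         = int r + \<lceil>real ((s - r) * t) / real (2 * t)\<rceil>)"
proof (intro conjI allI impI)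
  fix ns :: "nat list" and r
  assume h: "length ns \<ge> 2 \<and>
       (\<forall>i j. i \<le> j \<and> j < length ns \<longrightarrow> ns ! j \<le> ns ! i) \<and>
       (\<forall>i < length ns. ns ! i \<ge> 1) \<and>
       r = card {i. i < length ns \<and> ns ! i \<ge> 2 * t}"
  then show "int r + \<lceil>real (\<Sum>j = r..<length ns. ns ! j) / real (2 * t)\<rceil> \<le> int (chi_cmp t ns)"
    and "int (chi_cmp t ns) \<le> int r + \<lceil>real (\<Sum>j = r..<length ns. ns ! j) / real (t + 1)\<rceil>"
    using part1[OF assms] by blast+
next
  fix s r :: nat assume h: "2 \<le> s \<and> r \<le> s"
  then have rs: "r \<le> s" by simp
  let ?ns = "replicate r (2 * t + 1) @ replicate (s - r) (1::nat)"
  have up: "int (chi_cmp t ?ns) \<le> int r + \<lceil>real (\<Sum>j = r..<length ?ns. ?ns ! j) / real (t + 1)\<rceil>"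
    by (rule part1(2)[OF assms sorted_rr card_rr[symmetric]]) (use rs assms in auto)
  have sm: "(\<Sum>j = r..<length ?ns. ?ns ! j) = (s - r) * 1" by (rule sum_rr[OF rs])
  have lo: "real r + real (s - r) / real (t+1) \<le> real (chi_cmp t ?ns)" by (rule part2_lower[OF assms rs])
  have "\<lceil>real ((s - r) * 1) / real (t + 1)\<rceil> \<le> int (chi_cmp t ?ns) - int r"
    using lo by (simp add: ceiling_le_iff)
  moreover have "int (chi_cmp t ?ns) \<le> int r + \<lceil>real ((s - r) * 1) / real (t + 1)\<rceil>"
    using up unfolding sm .
  ultimately show "int (chi_cmp t ?ns) = int r + \<lceil>real ((s - r) * 1) / real (t + 1)\<rceil>"
    by linarith
next
  fix s r :: nat assume h: "2 \<le> s \<and> r \<le> s"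
  then have rs: "r \<le> s" by simp
  let ?ns = "replicate r (2 * t) @ replicate (s - r) t"
  have lo: "int r + \<lceil>real (\<Sum>j = r..<length ?ns. ?ns ! j) / real (2 * t)\<rceil> \<le> int (chi_cmp t ?ns)"
    by (rule part1(1)[OF assms sorted_rr card_rr[symmetric]]) (use rs assms in auto)
  have sm: "(\<Sum>j = r..<length ?ns. ?ns ! j) = (s - r) * t" by (rule sum_rr[OF rs])
  obtain f where f: "relaxed_coloring (cmp_vertices ?ns) cmp_adj t (r + ((s - r) + 2 - 1) div 2) f"
    using part3_upper[OF assms rs] by blast
  have up: "chi_cmp t ?ns \<le> r + ((s - r) + 2 - 1) div 2" by (rule chi_le[OF f])
  have eq: "real ((s - r) * t) / real (2 * t) = real (s - r) / real 2" using assms by simp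
  have "\<lceil>real (s - r) / real 2\<rceil> = int (((s - r) + 2 - 1) div 2)" by (rule ceil_div) simp
  then show "int (chi_cmp t ?ns) = int r + \<lceil>real ((s - r) * t) / real (2 * t)\<rceil>"
  proof -
    have lo2: "int r + \<lceil>real ((s - r) * t) / real (2 * t)\<rceil> \<le> int (chi_cmp t ?ns)"
      using lo unfolding sm .
    show ?thesis using lo2 up eq \<open>\<lceil>real (s - r) / real 2\<rceil> = _\<close> by linarith
  qed
qed

end
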